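(* Let $\tau=\infty$ and let $(V,\mathcal{E})$ be the lookdown representation based on $(X_n)$, $(k_n)$. Suppose (i) $\#\{i:k_n(i)=0\}\le1$ for each $n$, and (ii) fixation occurs almost surely. Then $\rho(v)=1$ for every $v\in V$.
   Context: Data: $\tau=\infty$, positive integers $(X_n)_{n\ge0}$, vectors $k_n=(k_n(i))_{i=1}^{X_n}$ of nonnegative integers with $\sum_ik_n(i)=X_{n+1}$. $V_n=\{(n,i):1\le i\le X_n\}$, $V=\bigcup_nV_n$. Lookdown representation: for each $n$ fix a partition $\xi_n$ of $\{1,\dots,X_{n+1}\}$ whose block sizes are the nonzero entries of $k_n$; let $(\sigma_n)$ be independent uniform random permutations of $\{1,\dots,X_{n+1}\}$; let $\Xi_n=\{\sigma_n(A):A\in\xi_n\}$ with blocks listed in increasing order of least element as $B_1,\dots,B_{\ell_n}$; $\mathcal{E}_n=\bigcup_i\{((n,i),(n+1,j)):j\in B_i\}$, $\mathcal{E}=\bigcup_n\mathcal{E}_n$. For $v\in V_n$, $m\ge n$, $D_m(v)$ is the set of vertices of $V_m$ reachable from $v$ by a directed path in $\mathcal{E}$. Fixation means: for each $n$ there is $m>n$ such that $D_m(v)=\emptyset$ for all but one $v\in V_n$ (equivalently, when $\tau=\infty$, the graph has a unique infinite directed path from generation $0$). Identification probability: $\mathcal{P}$ = permutations of $V$ preserving each $V_n$; $\sigma\in\mathcal{P}$ uniform means its restrictions to the $V_n$ are independent uniform permutations; $\sigma(E)=\{(\sigma(v),\sigma(w)):(v,w)\in E\}$. With $\sigma$ uniform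 independent of $\mathcal{E}$, for $v\in V_n$, $\rho(v)=\mathbb{E}[\max_{w\in V_n}\mathbb{P}(\sigma(v)=w\mid\sigma(\mathcal{E}))]$. *)

theory Defs
  imports "HOL-Probability.Probability" "HOL-Library.Multiset"
begin

definition Vlev :: "(nat \<Rightarrow> nat) \<Rightarrow> nat \<Rightarrow> (nat \<times> nat) set" where
  "Vlev X n = {(n, i) | i. 1 \<le> i \<and> i \<le> X n}"

definition Vall :: "(nat \<Rightarrow> nat) \<Rightarrow> (nat \<times> nat) set" where
  "Vall X = (\<Union>n. Vlev X n)"

definition admissible_data :: "(nat \<Rightarrow> nat) \<Rightarrow> (nat \<Rightarrow> nat \<Rightarrow> nat) \<Rightarrow> bool" where
  "admissible_data X k \<longleftrightarrow>
     (\<forall>n. 0 < X n \<and> (\<Sum>i\<in>{1..X n}. k n i) = X (Suc n))"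

definition fixed_partitions ::
  "(nat \<Rightarrow> nat) \<Rightarrow> (nat \<Rightarrow> nat \<Rightarrow> nat) \<Rightarrow> (nat \<Rightarrow> nat set set) \<Rightarrow> bool" where
  "fixed_partitions X k xi \<longleftrightarrow>
     (\<forall>n. partition_on {1..X (Suc n)} (xi n) \<and>
          image_mset card (mset_set (xi n)) =
            filter_mset (\<lambda>c. c \<noteq> 0) (image_mset (k n) (mset_set {1..X n})))"

definition Xi :: "(nat \<Rightarrow> nat set set) \<Rightarrow> (nat \<Rightarrow> nat \<Rightarrow> nat) \<Rightarrow> nat \<Rightarrow> nat set set" where
  "Xi xi s n = (\<lambda>A. s n ` A) ` xi n"

text \<open>Index of a block B of Xi_n when the blocks are listed in increasing order of
  least element (B_1, B_2, ...).\<close>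
definition block_index :: "nat set set \<Rightarrow> nat set \<Rightarrow> nat" where
  "block_index P B = Suc (card {B' \<in> P. Min B' < Min B})"

definition lookdown_edges ::
  "(nat \<Rightarrow> nat set set) \<Rightarrow> (nat \<Rightarrow> nat \<Rightarrow> nat) \<Rightarrow> ((nat \<times> nat) \<times> (nat \<times> nat)) set" where
  "lookdown_edges xi s =
     {((n, i), (Suc n, j)) | n i j. \<exists>B \<in> Xi xi s n. j \<in> B \<and> i = block_index (Xi xi s n) B}"

definition Desc :: "((nat \<times> nat) \<times> (nat \<times> nat)) set \<Rightarrow> nat \<Rightarrow> nat \<times> nat \<Rightarrow> (nat \<times> nat) set" where
  "Desc E m v = {w. fst w = m \<and> (v, w) \<in> E\<^sup>*}"

definition fixation :: "(nat \<Rightarrow> nat) \<Rightarrow> ((nat \<times> nat) \<times> (nat \<times> nat)) set \<Rightarrow> bool" where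
  "fixation X E \<longleftrightarrow>
     (\<forall>n. \<exists>m>n. \<exists>v\<in>Vlev X n. \<forall>u\<in>Vlev X n. u \<noteq> v \<longrightarrow> Desc E m u = {})"

definition vperm :: "(nat \<Rightarrow> nat \<Rightarrow> nat) \<Rightarrow> nat \<times> nat \<Rightarrow> nat \<times> nat" where
  "vperm p v = (fst v, p (fst v) (snd v))"

definition relabel_edges ::
  "(nat \<Rightarrow> nat \<Rightarrow> nat) \<Rightarrow> ((nat \<times> nat) \<times> (nat \<times> nat)) set \<Rightarrow> ((nat \<times> nat) \<times> (nat \<times> nat)) set" where
  "relabel_edges p E = {(vperm p v, vperm p w) | v w. (v, w) \<in> E}"

text \<open>Underlying probability space: for each n independently, a uniform permutation
  sigma_n of {1..X(n+1)} (lookdown construction) and a uniform permutation of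
  {1..X n} (the relabelling sigma restricted to V_n), all independent.\<close>
definition omega :: "(nat \<Rightarrow> nat) \<Rightarrow> (nat \<Rightarrow> (nat \<Rightarrow> nat) \<times> (nat \<Rightarrow> nat)) measure" where
  "omega X = (\<Pi>\<^sub>M n\<in>UNIV. measure_pmf
      (pair_pmf (pmf_of_set {p. p permutes {1..X (Suc n)}})
                (pmf_of_set {p. p permutes {1..X n}})))"

definition rand_E :: "(nat \<Rightarrow> nat set set) \<Rightarrow> (nat \<Rightarrow> (nat \<Rightarrow> nat) \<times> (nat \<Rightarrow> nat))
    \<Rightarrow> ((nat \<times> nat) \<times> (nat \<times> nat)) set" where
  "rand_E xi \<omega> = lookdown_edges xi (\<lambda>n. fst (\<omega> n))"

definition rand_perm :: "(nat \<Rightarrow> (nat \<Rightarrow> nat) \<times> (nat \<Rightarrow> nat)) \<Rightarrow> nat \<Rightarrow> nat \<Rightarrow> nat" where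
  "rand_perm \<omega> = (\<lambda>n. snd (\<omega> n))"

text \<open>The sigma-algebra generated by the random edge set sigma(E) (product sigma-algebra
  on edge sets, i.e. generated by the events "e \<in> sigma(E)").\<close>
definition obs_algebra :: "(nat \<Rightarrow> nat) \<Rightarrow> (nat \<Rightarrow> nat set set)
    \<Rightarrow> (nat \<Rightarrow> (nat \<Rightarrow> nat) \<times> (nat \<Rightarrow> nat)) measure" where
  "obs_algebra X xi = sigma (space (omega X))
     {{\<omega> \<in> space (omega X). e \<in> relabel_edges (rand_perm \<omega>) (rand_E xi \<omega>)} | e. True}"

definition rho :: "(nat \<Rightarrow> nat) \<Rightarrow> (nat \<Rightarrow> nat set set) \<Rightarrow> nat \<times> nat \<Rightarrow> real" where
  "rho X xi v = (\<integral>\<omega>. Max ((\<lambda>w. real_cond_exp (omega X) (obs_algebra X xi)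
        (indicator {\<omega>' \<in> space (omega X). vperm (rand_perm \<omega>') v = w}) \<omega>) ` Vlev X (fst v))
      \<partial>omega X)"

end

theory Submission
  imports Defs
begin



definition chs :: "(nat \<Rightarrow> nat) \<Rightarrow> ((nat \<times> nat) \<times> (nat \<times> nat)) set \<Rightarrow> nat \<Rightarrow> nat \<times> nat \<Rightarrow> (nat \<times> nat) set" where
  "chs X H j x = {z \<in> Vlev X (Suc j). (x, z) \<in> H}"

fun reach :: "(nat \<Rightarrow> nat) \<Rightarrow> ((nat \<times> nat) \<times> (nat \<times> nat)) set \<Rightarrow> nat \<Rightarrow> nat \<Rightarrow> nat \<times> nat \<Rightarrow> bool" where
  "reach X H 0 j x = True"
| "reach X H (Suc d) j x = (\<exists>c\<in>chs X H j x. reach X H d (Suc j) c)"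

fun ord :: "(nat \<Rightarrow> nat) \<Rightarrow> ((nat \<times> nat) \<times> (nat \<times> nat)) set \<Rightarrow> nat \<Rightarrow> nat \<Rightarrow> nat \<times> nat \<Rightarrow> nat \<times> nat \<Rightarrow> bool" where
  "ord X H 0 j x y = (snd x < snd y)"
| "ord X H (Suc d) j x y = (chs X H j x \<noteq> {} \<and> (chs X H j y = {} \<or>
      (\<exists>c\<in>chs X H j x. \<forall>c'\<in>chs X H j y. ord X H d (Suc j) c c')))"

definition dlab :: "(nat \<Rightarrow> nat) \<Rightarrow> ((nat \<times> nat) \<times> (nat \<times> nat)) set \<Rightarrow> nat \<Rightarrow> nat \<Rightarrow> nat \<times> nat \<Rightarrow> nat" where
  "dlab X H d j x = Suc (card {y \<in> Vlev X j. ord X H d j y x})"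

lemma finite_Vlev: "finite (Vlev X j)"
proof -
  have "Vlev X j = (\<lambda>i. (j, i)) ` {1..X j}" by (auto simp: Vlev_def)
  thus ?thesis by simp
qed

lemma finite_chs: "finite (chs X H j x)"
  by (rule finite_subset[OF _ finite_Vlev[of X "Suc j"]]) (auto simp: chs_def)

lemma ord_irrefl: "\<not> ord X H d j x x"
  by (induction d arbitrary: j x) auto

lemma Min_less_iff_ex:
  fixes A B :: "nat set"
  assumes "finite A" "A \<noteq> {}" "finite B" "B \<noteq> {}"
  shows "Min A < Min B \<longleftrightarrow> (\<exists>a\<in>A. \<forall>b\<in>B. a < b)"
proof
  assume "Min A < Min B"
  then show "\<exists>a\<in>A. \<forall>b\<in>B. a < b" using assms by (intro bexI[of _ "Min A"]) (auto intro: less_le_trans)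
next
  assume "\<exists>a\<in>A. \<forall>b\<in>B. a < b"
  then obtain a where "a \<in> A" "\<forall>b\<in>B. a < b" by blast
  moreover have "Min B \<in> B" using assms by simp
  ultimately show "Min A < Min B" using assms by (meson Min_le le_less_trans)
qed

lemma Min_img_less_iff:
  fixes T :: "'a \<Rightarrow> nat"
  assumes "finite A" "A \<noteq> {}" "finite B" "B \<noteq> {}"
  shows "Min (T ` A) < Min (T ` B) \<longleftrightarrow> (\<exists>a\<in>A. \<forall>b\<in>B. T a < T b)"
proof -
  have "Min (T ` A) < Min (T ` B) \<longleftrightarrow> (\<exists>a\<in>T ` A. \<forall>b\<in>T ` B. a < b)"
    using assms by (intro Min_less_iff_ex) auto
  also have "\<dots> \<longleftrightarrow> (\<exists>a\<in>A. \<forall>b\<in>B. T a < T b)" by auto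
  finally show ?thesis .
qed

locale labeling =
  fixes X :: "nat \<Rightarrow> nat" and H :: "((nat \<times> nat) \<times> (nat \<times> nat)) set" and T :: "nat \<times> nat \<Rightarrow> nat"
  assumes T_inj: "\<And>j. inj_on T (Vlev X j)"
    and T_img: "\<And>j. T ` Vlev X j = {1..X j}"
    and T_childless: "\<And>j x. x \<in> Vlev X j \<Longrightarrow> chs X H j x = {} \<Longrightarrow> T x = X j"
    and T_order: "\<And>j x y. x \<in> Vlev X j \<Longrightarrow> y \<in> Vlev X j \<Longrightarrow> chs X H j x \<noteq> {} \<Longrightarrow> chs X H j y \<noteq> {} \<Longrightarrow>
        (T x < T y \<longleftrightarrow> Min (T ` chs X H j x) < Min (T ` chs X H j y))"
    and T_disj: "\<And>j x y. x \<in> Vlev X j \<Longrightarrow> y \<in> Vlev X j \<Longrightarrow> x \<noteq> y \<Longrightarrow> chs X H j x \<inter> chs X H j y = {}"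
begin

lemma T_le: "x \<in> Vlev X j \<Longrightarrow> T x \<le> X j"
  using T_img by fastforce

lemma ord_correct:
  "x \<in> Vlev X j \<Longrightarrow> y \<in> Vlev X j \<Longrightarrow> x \<noteq> y \<Longrightarrow> \<not> (reach X H d j x \<and> reach X H d j y)
   \<Longrightarrow> ord X H d j x y \<longleftrightarrow> T x < T y"
proof (induction d arbitrary: j x y)
  case 0
  then show ?case by simp
next
  case (Suc d)
  have Tne: "T x \<noteq> T y" using T_inj[of j] Suc.prems by (meson inj_on_contraD)
  show ?case
  proof (cases "chs X H j x = {}")
    case True
    then have Tx: "T x = X j" using T_childless[OF Suc.prems(1)] by simp
    show ?thesis
    proof (cases "chs X H j y = {}")
      case True
      then have "T y = X j" using T_childless[OF Suc.prems(2)] by simp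
      with Tx Tne show ?thesis by simp
    next
      case False
      then show ?thesis using \<open>chs X H j x = {}\<close> Tx T_le[OF Suc.prems(2)] Tne by simp
    qed
  next
    case cx: False
    show ?thesis
    proof (cases "chs X H j y = {}")
      case True
      then have "T y = X j" using T_childless[OF Suc.prems(2)] by simp
      then show ?thesis using True cx T_le[OF Suc.prems(1)] Tne by simp
    next
      case cy: False
      have sub: "ord X H d (Suc j) c c' \<longleftrightarrow> T c < T c'"
        if c: "c \<in> chs X H j x" and c': "c' \<in> chs X H j y" for c c'
      proof (rule Suc.IH)
        show "c \<in> Vlev X (Suc j)" "c' \<in> Vlev X (Suc j)" using c c' by (auto simp: chs_def)
        show "c \<noteq> c'" using T_disj[OF Suc.prems(1,2,3)] c c' by auto
        show "\<not> (reach X H d (Suc j) c \<and> reach X H d (Suc j) c')"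
          using Suc.prems(4) c c' by (auto simp del: reach.simps(1))
      qed
      have "ord X H (Suc d) j x y \<longleftrightarrow> (\<exists>c\<in>chs X H j x. \<forall>c'\<in>chs X H j y. ord X H d (Suc j) c c')"
        using cx cy by simp
      also have "\<dots> \<longleftrightarrow> (\<exists>c\<in>chs X H j x. \<forall>c'\<in>chs X H j y. T c < T c')"
        using sub by (meson)
      also have "\<dots> \<longleftrightarrow> Min (T ` chs X H j x) < Min (T ` chs X H j y)"
        by (rule Min_img_less_iff[symmetric]) (use cx cy finite_chs in auto)
      also have "\<dots> \<longleftrightarrow> T x < T y" using T_order[OF Suc.prems(1,2) cx cy] by simp
      finally show ?thesis .
    qed
  qed
qed

lemma dlab_correct:
  assumes x: "x \<in> Vlev X j"
    and good: "\<forall>y\<in>Vlev X j. \<forall>z\<in>Vlev X j. reach X H d j y \<and> reach X H d j z \<longrightarrow> y = z"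
  shows "dlab X H d j x = T x"
proof -
  have "{y \<in> Vlev X j. ord X H d j y x} = {y \<in> Vlev X j. T y < T x}"
  proof (intro Collect_cong conj_cong refl)
    fix y assume y: "y \<in> Vlev X j"
    show "ord X H d j y x \<longleftrightarrow> T y < T x"
    proof (cases "y = x")
      case True then show ?thesis using ord_irrefl by simp
    next
      case False
      have "\<not> (reach X H d j y \<and> reach X H d j x)" using good x y False by blast
      then show ?thesis using ord_correct[OF y x False] by simp
    qed
  qed
  also have "card \<dots> = card {t \<in> {1..X j}. t < T x}"
  proof -
    have "T ` {y \<in> Vlev X j. T y < T x} = {t \<in> T ` Vlev X j. t < T x}" by auto
    then have "{t \<in> {1..X j}. t < T x} = T ` {y \<in> Vlev X j. T y < T x}"
      using T_img[of j] by simp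
    moreover have "inj_on T {y \<in> Vlev X j. T y < T x}" using T_inj by (rule inj_on_subset) auto
    ultimately show ?thesis by (simp add: card_image)
  qed
  also have "{t \<in> {1..X j}. t < T x} = {1..<T x}" using T_le[OF x] by auto
  also have "card {1..<T x} = T x - 1" by simp
  finally have "card {y \<in> Vlev X j. ord X H d j y x} = T x - 1" .
  moreover have "T x \<in> {1..X j}" using x T_img[of j] by (metis imageI)
  ultimately show ?thesis unfolding dlab_def by simp
qed

end




lemma bi_mono:
  assumes P: "finite P" and B: "B \<in> P" and B': "B' \<in> P" and lt: "Min B < Min B'"
  shows "block_index P B < block_index P B'"
proof -
  have "{B'' \<in> P. Min B'' < Min B} \<subset> {B'' \<in> P. Min B'' < Min B'}"
    using lt B by auto
  then have "card {B'' \<in> P. Min B'' < Min B} < card {B'' \<in> P. Min B'' < Min B'}"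
    using P by (intro psubset_card_mono) auto
  then show ?thesis by (simp add: block_index_def)
qed

lemma Min_inj_blocks:
  assumes fin: "\<forall>B\<in>P. finite B \<and> B \<noteq> {}" and dis: "disjoint P"
    and B: "B \<in> P" and B': "B' \<in> P" and eq: "Min B = Min B'"
  shows "B = B'"
proof (rule ccontr)
  assume "B \<noteq> B'"
  then have "B \<inter> B' = {}" using disjointD[OF dis B B'] by simp
  moreover have "Min B \<in> B" "Min B' \<in> B'" using fin B B' by auto
  ultimately show False using eq by auto
qed

lemma bi_inj:
  assumes P: "finite P" and fin: "\<forall>B\<in>P. finite B \<and> B \<noteq> {}" and dis: "disjoint P"
  shows "inj_on (block_index P) P"
proof (rule inj_onI)
  fix B B' assume B: "B \<in> P" and B': "B' \<in> P" and eq: "block_index P B = block_index P B'"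
  show "B = B'"
  proof (cases "Min B = Min B'")
    case True then show ?thesis using Min_inj_blocks[OF fin dis B B'] by simp
  next
    case False
    then have "Min B < Min B' \<or> Min B' < Min B" by linarith
    then show ?thesis using bi_mono[OF P B B'] bi_mono[OF P B' B] eq by auto
  qed
qed

lemma bi_range:
  assumes P: "finite P" and fin: "\<forall>B\<in>P. finite B \<and> B \<noteq> {}" and dis: "disjoint P"
  shows "block_index P ` P = {1..card P}"
proof (rule card_subset_eq)
  show "finite {1..card P}" by simp
  show "block_index P ` P \<subseteq> {1..card P}"
  proof
    fix x assume "x \<in> block_index P ` P"
    then obtain B where B: "B \<in> P" and x: "x = block_index P B" by blast
    have "{B'' \<in> P. Min B'' < Min B} \<subseteq> P - {B}" by auto
    then have "card {B'' \<in> P. Min B'' < Min B} \<le> card (P - {B})" using P by (intro card_mono) auto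
    also have "\<dots> = card P - 1" using B P by simp
    finally have "card {B'' \<in> P. Min B'' < Min B} \<le> card P - 1" .
    moreover have "card P \<ge> 1" using B P by (metis One_nat_def Suc_leI card_gt_0_iff empty_iff)
    ultimately show "x \<in> {1..card P}" unfolding x block_index_def by auto
  qed
  show "card (block_index P ` P) = card {1..card P}"
    using bi_inj[OF P fin dis] by (simp add: card_image)
qed




locale ld =
  fixes X :: "nat \<Rightarrow> nat" and k :: "nat \<Rightarrow> nat \<Rightarrow> nat" and xi :: "nat \<Rightarrow> nat set set"
    and s :: "nat \<Rightarrow> nat \<Rightarrow> nat"
  assumes adm: "admissible_data X k"
    and fp: "fixed_partitions X k xi"
    and zeros: "\<And>n. card {i \<in> {1..X n}. k n i = 0} \<le> 1"
    and sperm: "\<And>n. s n permutes {1..X (Suc n)}"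
begin

abbreviation "P n \<equiv> Xi xi s n"
abbreviation "E \<equiv> lookdown_edges xi s"

lemma part: "partition_on {1..X (Suc n)} (xi n)"
  using fp by (simp add: fixed_partitions_def)

lemma xi_finite: "finite (xi n)"
  using part[of n] by (metis finite_UnionD finite_atLeastAtMost partition_on_def)

lemma xi_blocks: "A \<in> xi n \<Longrightarrow> A \<subseteq> {1..X (Suc n)} \<and> A \<noteq> {}"
  using part[of n] unfolding partition_on_def by blast

lemma P_finite: "finite (P n)"
  using xi_finite by (simp add: Xi_def)

lemma P_blocks: "B \<in> P n \<Longrightarrow> B \<subseteq> {1..X (Suc n)} \<and> B \<noteq> {} \<and> finite B"
proof -
  assume "B \<in> P n"
  then obtain A where A: "A \<in> xi n" and B: "B = s n ` A" by (auto simp: Xi_def)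
  have "A \<subseteq> {1..X (Suc n)}" "A \<noteq> {}" using xi_blocks[OF A] by auto
  moreover have "s n ` {1..X (Suc n)} = {1..X (Suc n)}" using permutes_image[OF sperm] .
  moreover have "finite A" using \<open>A \<subseteq> _\<close> by (rule finite_subset) simp
  ultimately show ?thesis unfolding B by auto
qed

lemma P_fin': "\<forall>B\<in>P n. finite B \<and> B \<noteq> {}" using P_blocks by blast

lemma P_disj: "disjoint (P n)"
proof -
  have "disjoint (xi n)" using part[of n] by (simp add: partition_on_def)
  then show ?thesis unfolding Xi_def
    by (intro disjoint_image) (use permutes_inj[OF sperm[of n]] in \<open>auto intro: inj_on_subset\<close>)
qed

lemma card_P: "card (P n) = card (xi n)"
proof -
  have "inj (image (s n))" using permutes_inj[OF sperm[of n]]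
    by (simp add: inj_def inj_image_eq_iff)
  then show ?thesis unfolding Xi_def by (simp add: card_image inj_on_subset)
qed

lemma card_xi: "card (xi n) \<ge> X n - 1"
proof -
  have "card (xi n) = size (image_mset card (mset_set (xi n)))" by simp
  also have "\<dots> = size (filter_mset (\<lambda>c. c \<noteq> 0) (image_mset (k n) (mset_set {1..X n})))"
    using fp by (simp add: fixed_partitions_def)
  also have "\<dots> = card {i \<in> {1..X n}. k n i \<noteq> 0}"
    by (simp add: filter_mset_image_mset)
  finally have c: "card (xi n) = card {i \<in> {1..X n}. k n i \<noteq> 0}" .
  have "card {i \<in> {1..X n}. k n i \<noteq> 0} + card {i \<in> {1..X n}. k n i = 0} = X n"
  proof -
    have "card {1..X n} = card ({i \<in> {1..X n}. k n i \<noteq> 0} \<union> {i \<in> {1..X n}. k n i = 0})"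
      by (rule arg_cong[where f=card]) auto
    also have "\<dots> = card {i \<in> {1..X n}. k n i \<noteq> 0} + card {i \<in> {1..X n}. k n i = 0}"
      by (rule card_Un_disjoint) auto
    finally show ?thesis by simp
  qed
  then show ?thesis using c zeros[of n] by linarith
qed

lemma E_iff: "((a, i), (b, j)) \<in> E \<longleftrightarrow> b = Suc a \<and> (\<exists>B\<in>P a. j \<in> B \<and> i = block_index (P a) B)"
  unfolding lookdown_edges_def by blast

lemma chs_E: "chs X E n (n, i) = {(Suc n, j) | j. \<exists>B\<in>P n. j \<in> B \<and> i = block_index (P n) B}"
proof -
  have "\<And>B j. B \<in> P n \<Longrightarrow> j \<in> B \<Longrightarrow> (Suc n, j) \<in> Vlev X (Suc n)"
    using P_blocks by (force simp: Vlev_def)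
  then show ?thesis unfolding chs_def
    by (auto simp: E_iff Vlev_def)
qed

lemma chs_E_block:
  assumes "B \<in> P n" "block_index (P n) B = i"
  shows "snd ` chs X E n (n, i) = B"
proof -
  have "\<And>B'. B' \<in> P n \<Longrightarrow> block_index (P n) B' = i \<Longrightarrow> B' = B"
    using bi_inj[OF P_finite P_fin' P_disj, of n] assms by (auto dest: inj_onD)
  then show ?thesis using assms unfolding chs_E by force
qed

lemma chs_E_nonempty:
  assumes "chs X E n (n, i) \<noteq> {}"
  obtains B where "B \<in> P n" "block_index (P n) B = i"
  using assms unfolding chs_E by auto

lemma E_childless:
  assumes u: "(n, i) \<in> Vlev X n" and e: "chs X E n (n, i) = {}"
  shows "i = X n"
proof -
  have i: "1 \<le> i" "i \<le> X n" using u by (auto simp: Vlev_def)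
  have "\<not> i \<le> card (P n)"
  proof
    assume "i \<le> card (P n)"
    then have "i \<in> block_index (P n) ` P n" using bi_range[OF P_finite P_fin' P_disj, of n] i by auto
    then obtain B where B: "B \<in> P n" "block_index (P n) B = i" by blast
    then have "snd ` chs X E n (n, i) = B" by (rule chs_E_block)
    with e P_blocks[OF B(1)] show False by simp
  qed
  then show ?thesis using card_P[of n] card_xi[of n] i by linarith
qed

lemma E_order:
  assumes "chs X E n (n, i) \<noteq> {}" "chs X E n (n, i') \<noteq> {}"
  shows "i < i' \<longleftrightarrow> Min (snd ` chs X E n (n, i)) < Min (snd ` chs X E n (n, i'))"
proof -
  obtain B where B: "B \<in> P n" "block_index (P n) B = i" using assms(1) by (rule chs_E_nonempty)
  obtain B' where B': "B' \<in> P n" "block_index (P n) B' = i'" using assms(2) by (rule chs_E_nonempty)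
  have e: "snd ` chs X E n (n, i) = B" "snd ` chs X E n (n, i') = B'"
    using chs_E_block B B' by auto
  show ?thesis
  proof (cases "Min B = Min B'")
    case True
    then have "B = B'" using Min_inj_blocks[OF P_fin' P_disj B(1) B'(1)] by simp
    then show ?thesis using e B B' True by simp
  next
    case False
    then have "Min B < Min B' \<or> Min B' < Min B" by linarith
    then show ?thesis using bi_mono[OF P_finite B(1) B'(1)] bi_mono[OF P_finite B'(1) B(1)] e B B'
      by auto
  qed
qed

lemma E_disj:
  assumes "i \<noteq> i'"
  shows "chs X E n (n, i) \<inter> chs X E n (n, i') = {}"
proof (rule ccontr)
  assume "chs X E n (n, i) \<inter> chs X E n (n, i') \<noteq> {}"
  then obtain j B B' where B: "B \<in> P n" "j \<in> B" "i = block_index (P n) B"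
    and B': "B' \<in> P n" "j \<in> B'" "i' = block_index (P n) B'"
    unfolding chs_E by auto
  then have "B \<noteq> B'" using assms by auto
  then show False using disjointD[OF P_disj B(1) B'(1)] B B' by auto
qed

end




definition good :: "(nat \<Rightarrow> nat) \<Rightarrow> ((nat \<times> nat) \<times> (nat \<times> nat)) set \<Rightarrow> nat \<Rightarrow> nat \<Rightarrow> bool" where
  "good X H n d \<longleftrightarrow> (\<forall>y\<in>Vlev X n. \<forall>z\<in>Vlev X n. reach X H d n y \<and> reach X H d n z \<longrightarrow> y = z)"

locale ld2 = ld +
  fixes p :: "nat \<Rightarrow> nat \<Rightarrow> nat"
  assumes pperm: "\<And>n. p n permutes {1..X n}"
begin

abbreviation "G \<equiv> relabel_edges p E"

definition T :: "nat \<times> nat \<Rightarrow> nat" where "T x = inv (p (fst x)) (snd x)"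

lemma vperm_inj: "vperm p a = vperm p b \<Longrightarrow> a = b"
  using permutes_inj[OF pperm] unfolding vperm_def by (cases a, cases b) (auto dest: injD)

lemma vperm_V: "vperm p u \<in> Vlev X j \<longleftrightarrow> u \<in> Vlev X j"
proof -
  have "p j i \<in> {1..X j} \<longleftrightarrow> i \<in> {1..X j}" for i using permutes_in_image[OF pperm] .
  then show ?thesis by (cases u) (auto simp: vperm_def Vlev_def)
qed

lemma vperm_surj: "x \<in> Vlev X j \<Longrightarrow> \<exists>u\<in>Vlev X j. x = vperm p u"
proof -
  assume x: "x \<in> Vlev X j"
  let ?u = "(fst x, inv (p (fst x)) (snd x))"
  have "x = vperm p ?u" by (simp add: vperm_def permutes_inverses[OF pperm])
  moreover have "?u \<in> Vlev X j" using x vperm_V[of ?u j] \<open>x = vperm p ?u\<close> by simp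
  ultimately show ?thesis by blast
qed

lemma T_vperm: "T (vperm p u) = snd u"
  by (simp add: T_def vperm_def permutes_inverses[OF pperm])

lemma chs_G: "chs X G j (vperm p u) = vperm p ` chs X E j u"
proof (rule set_eqI)
  fix z
  have "z \<in> chs X G j (vperm p u) \<longleftrightarrow> z \<in> Vlev X (Suc j) \<and> (\<exists>b. (u, b) \<in> E \<and> z = vperm p b)"
    unfolding chs_def relabel_edges_def using vperm_inj by blast
  also have "\<dots> \<longleftrightarrow> (\<exists>b. b \<in> Vlev X (Suc j) \<and> (u, b) \<in> E \<and> z = vperm p b)"
    using vperm_V by blast
  also have "\<dots> \<longleftrightarrow> z \<in> vperm p ` chs X E j u" unfolding chs_def by blast
  finally show "z \<in> chs X G j (vperm p u) \<longleftrightarrow> z \<in> vperm p ` chs X E j u" .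
qed

lemma reach_G: "reach X G d j (vperm p u) \<longleftrightarrow> reach X E d j u"
  by (induction d arbitrary: j u) (auto simp: chs_G)

lemma V_fst: "u \<in> Vlev X j \<Longrightarrow> u = (j, snd u)"
  by (auto simp: Vlev_def)

lemma labeling: "labeling X G T"
proof
  fix j
  show "inj_on T (Vlev X j)"
  proof (rule inj_onI)
    fix x y assume x: "x \<in> Vlev X j" and y: "y \<in> Vlev X j" and e: "T x = T y"
    obtain u where u: "u \<in> Vlev X j" "x = vperm p u" using vperm_surj[OF x] by blast
    obtain u' where u': "u' \<in> Vlev X j" "y = vperm p u'" using vperm_surj[OF y] by blast
    have "snd u = snd u'" using e u u' T_vperm by simp
    then have "u = u'" using V_fst[OF u(1)] V_fst[OF u'(1)] by simp
    then show "x = y" using u u' by simp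
  qed
  have "vperm p ` Vlev X j = Vlev X j" using vperm_V vperm_surj by blast
  then have "T ` Vlev X j = T ` vperm p ` Vlev X j" by simp
  also have "\<dots> = snd ` Vlev X j" by (simp add: image_image T_vperm)
  also have "\<dots> = {1..X j}" by (force simp: Vlev_def)
  finally show "T ` Vlev X j = {1..X j}" .
next
  fix j x assume x: "x \<in> Vlev X j" and e: "chs X G j x = {}"
  obtain u where u: "u \<in> Vlev X j" "x = vperm p u" using vperm_surj[OF x] by blast
  have "chs X E j (j, snd u) = {}" using e u chs_G V_fst[OF u(1)] by (metis image_is_empty)
  then have "snd u = X j" using E_childless V_fst[OF u(1)] u(1) by metis
  then show "T x = X j" using u T_vperm by simp
next
  fix j x y assume x: "x \<in> Vlev X j" and y: "y \<in> Vlev X j"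
    and cx: "chs X G j x \<noteq> {}" and cy: "chs X G j y \<noteq> {}"
  obtain u where u: "u \<in> Vlev X j" "x = vperm p u" using vperm_surj[OF x] by blast
  obtain u' where u': "u' \<in> Vlev X j" "y = vperm p u'" using vperm_surj[OF y] by blast
  have im: "T ` chs X G j (vperm p w) = snd ` chs X E j w" for w
    by (simp add: chs_G image_image T_vperm)
  have cu: "chs X E j (j, snd u) \<noteq> {}" using cx u chs_G V_fst[OF u(1)] by (metis image_is_empty)
  have cu': "chs X E j (j, snd u') \<noteq> {}" using cy u' chs_G V_fst[OF u'(1)] by (metis image_is_empty)
  show "T x < T y \<longleftrightarrow> Min (T ` chs X G j x) < Min (T ` chs X G j y)"
    using E_order[OF cu cu'] u u' im T_vperm V_fst[OF u(1)] V_fst[OF u'(1)] by metis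
next
  fix j x y assume x: "x \<in> Vlev X j" and y: "y \<in> Vlev X j" and ne: "x \<noteq> y"
  obtain u where u: "u \<in> Vlev X j" "x = vperm p u" using vperm_surj[OF x] by blast
  obtain u' where u': "u' \<in> Vlev X j" "y = vperm p u'" using vperm_surj[OF y] by blast
  have "snd u \<noteq> snd u'" using ne u u' V_fst[OF u(1)] V_fst[OF u'(1)] by metis
  then have "chs X E j (j, snd u) \<inter> chs X E j (j, snd u') = {}" by (rule E_disj)
  then have "chs X E j u \<inter> chs X E j u' = {}" using V_fst[OF u(1)] V_fst[OF u'(1)] by metis
  then show "chs X G j x \<inter> chs X G j y = {}"
  proof -
    have "inj (vperm p)" using vperm_inj by (rule injI)
    then show ?thesis using u u' chs_G \<open>chs X E j u \<inter> chs X E j u' = {}\<close> by (simp add: image_Int[symmetric])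
  qed
qed

lemma reach_Desc: "u \<in> Vlev X j \<Longrightarrow> reach X E d j u \<Longrightarrow> Desc E (j + d) u \<noteq> {}"
proof (induction d arbitrary: j u)
  case 0
  then have "u \<in> Desc E (j + 0) u" by (auto simp: Desc_def Vlev_def)
  then show ?case by blast
next
  case (Suc d)
  then obtain c where c: "c \<in> chs X E j u" "reach X E d (Suc j) c" by auto
  have cV: "c \<in> Vlev X (Suc j)" and uc: "(u, c) \<in> E" using c by (auto simp: chs_def)
  from Suc.IH[OF cV c(2)] obtain w where "w \<in> Desc E (Suc j + d) c" by blast
  then have "fst w = j + Suc d" "(c, w) \<in> E\<^sup>*" by (auto simp: Desc_def)
  then have "w \<in> Desc E (j + Suc d) u" using uc by (auto simp: Desc_def intro: converse_rtrancl_into_rtrancl)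
  then show ?case by blast
qed


lemma fixation_good:
  assumes "fixation X E"
  shows "\<exists>d. good X G n d"
proof -
  obtain m v where m: "m > n" and v: "v \<in> Vlev X n" and D: "\<forall>u\<in>Vlev X n. u \<noteq> v \<longrightarrow> Desc E m u = {}"
    using assms unfolding fixation_def by blast
  have "good X G n (m - n)" unfolding good_def
  proof (intro ballI impI)
    fix y z assume y: "y \<in> Vlev X n" and z: "z \<in> Vlev X n"
      and r: "reach X G (m - n) n y \<and> reach X G (m - n) n z"
    obtain u where u: "u \<in> Vlev X n" "y = vperm p u" using vperm_surj[OF y] by blast
    obtain u' where u': "u' \<in> Vlev X n" "z = vperm p u'" using vperm_surj[OF z] by blast
    have "Desc E m u \<noteq> {}" using reach_Desc[OF u(1), of "m - n"] r u reach_G m by simp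
    then have "u = v" using D u by blast
    have "Desc E m u' \<noteq> {}" using reach_Desc[OF u'(1), of "m - n"] r u' reach_G m by simp
    then have "u' = v" using D u' by blast
    show "y = z" using u u' \<open>u = v\<close> \<open>u' = v\<close> by simp
  qed
  then show ?thesis by blast
qed

lemma decode:
  assumes v: "v \<in> Vlev X n" and w: "w \<in> Vlev X n" and g: "good X G n d"
  shows "vperm p v = w \<longleftrightarrow> dlab X G d n w = snd v"
proof -
  interpret labeling X G T by (rule labeling)
  have "dlab X G d n w = T w" using dlab_correct[OF w] g by (simp add: good_def)
  obtain u where u: "u \<in> Vlev X n" "w = vperm p u" using vperm_surj[OF w] by blast
  have "vperm p v = w \<longleftrightarrow> v = u" using u vperm_inj by blast
  also have "\<dots> \<longleftrightarrow> snd u = snd v" using V_fst[OF u(1)] V_fst[OF v] by metis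
  finally show ?thesis using \<open>dlab X G d n w = T w\<close> u T_vperm by simp
qed

end




definition Gw :: "(nat \<Rightarrow> nat set set) \<Rightarrow> (nat \<Rightarrow> (nat \<Rightarrow> nat) \<times> (nat \<Rightarrow> nat)) \<Rightarrow> ((nat \<times> nat) \<times> (nat \<times> nat)) set" where
  "Gw xi \<omega> = relabel_edges (rand_perm \<omega>) (rand_E xi \<omega>)"

lemma omega_prob: "prob_space (omega X)"
  unfolding omega_def by (rule prob_space_PiM) (simp add: prob_space_measure_pmf)

lemma pred_comp: "Measurable.pred (omega X) (\<lambda>\<omega>. R (\<omega> a))"
  unfolding omega_def by (rule pred_sets1[OF _ measurable_component_singleton]) auto

lemma sets_comp: "{\<omega> \<in> space (omega X). R (\<omega> a)} \<in> sets (omega X)"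
  using pred_comp[where X=X and R=R and a=a] by (simp add: pred_def)

lemma Gw_mem: "((a, i), (b, j)) \<in> Gw xi \<omega> \<longleftrightarrow>
  (\<exists>i' j'. (b = Suc a \<and> (\<exists>B\<in>(\<lambda>A. fst (\<omega> a) ` A) ` xi a. j' \<in> B \<and> i' = block_index ((\<lambda>A. fst (\<omega> a) ` A) ` xi a) B)
      \<and> snd (\<omega> a) i' = i) \<and> snd (\<omega> b) j' = j)"
  unfolding Gw_def relabel_edges_def rand_E_def rand_perm_def lookdown_edges_def vperm_def Xi_def
  by force

lemma gen_meas: "{\<omega> \<in> space (omega X). e \<in> Gw xi \<omega>} \<in> sets (omega X)"
proof -
  obtain a i b j where e: "e = ((a, i), (b, j))" by (metis prod.collapse)
  have "Measurable.pred (omega X) (\<lambda>\<omega>. \<exists>i' j'. (b = Suc a \<and> (\<exists>B\<in>(\<lambda>A. fst (\<omega> a) ` A) ` xi a. j' \<in> B \<and> i' = block_index ((\<lambda>A. fst (\<omega> a) ` A) ` xi a) B)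
      \<and> snd (\<omega> a) i' = i) \<and> snd (\<omega> b) j' = j)"
    by (intro pred_intros_countable pred_intros_logic pred_comp[where R = "\<lambda>\<alpha>. _ \<alpha>"])
  then show ?thesis unfolding e Gw_mem pred_def .
qed

lemma obs_subalg: "subalgebra (omega X) (obs_algebra X xi)"
proof -
  let ?A = "{{\<omega> \<in> space (omega X). e \<in> relabel_edges (rand_perm \<omega>) (rand_E xi \<omega>)} | e. True}"
  have A: "?A \<subseteq> Pow (space (omega X))" by auto
  have A': "?A \<subseteq> sets (omega X)" using gen_meas[of X _ xi] by (auto simp: Gw_def)
  show ?thesis unfolding subalgebra_def obs_algebra_def
    using A A' by (simp add: sets.sigma_sets_subset)
qed

lemma gen_obs: "{\<omega> \<in> space (omega X). e \<in> Gw xi \<omega>} \<in> sets (obs_algebra X xi)"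
  unfolding obs_algebra_def Gw_def
  apply (rule in_measure_of)
   apply blast
  apply (rule CollectI)
  apply (rule exI[of _ e])
  by simp

lemma space_obs: "space (obs_algebra X xi) = space (omega X)"
  using obs_subalg by (simp add: subalgebra_def)




definition agree :: "(nat \<Rightarrow> nat) \<Rightarrow> ((nat \<times> nat) \<times> (nat \<times> nat)) set \<Rightarrow> ((nat \<times> nat) \<times> (nat \<times> nat)) set \<Rightarrow> nat \<Rightarrow> bool" where
  "agree X H H' N \<longleftrightarrow> (\<forall>j<N. \<forall>x\<in>Vlev X j. \<forall>z\<in>Vlev X (Suc j). ((x, z) \<in> H \<longleftrightarrow> (x, z) \<in> H'))"

lemma chs_agree: "agree X H H' N \<Longrightarrow> j < N \<Longrightarrow> x \<in> Vlev X j \<Longrightarrow> chs X H j x = chs X H' j x"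
  unfolding agree_def chs_def by auto

lemma chs_V: "c \<in> chs X H j x \<Longrightarrow> c \<in> Vlev X (Suc j)"
  by (simp add: chs_def)

lemma reach_agree: "agree X H H' (j + d) \<Longrightarrow> x \<in> Vlev X j \<Longrightarrow> reach X H d j x = reach X H' d j x"
proof (induction d arbitrary: j x)
  case 0 then show ?case by simp
next
  case (Suc d)
  have ch: "chs X H j x = chs X H' j x" using chs_agree[OF Suc.prems(1) _ Suc.prems(2)] by simp
  have "agree X H H' (Suc j + d)" using Suc.prems(1) by simp
  then have "\<And>c. c \<in> chs X H j x \<Longrightarrow> reach X H d (Suc j) c = reach X H' d (Suc j) c"
    using Suc.IH chs_V by blast
  then show ?case using ch by auto
qed

lemma ord_agree: "agree X H H' (j + d) \<Longrightarrow> x \<in> Vlev X j \<Longrightarrow> y \<in> Vlev X j \<Longrightarrow> ord X H d j x y = ord X H' d j x y"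
proof (induction d arbitrary: j x y)
  case 0 then show ?case by simp
next
  case (Suc d)
  have ch: "chs X H j x = chs X H' j x" "chs X H j y = chs X H' j y"
    using chs_agree[OF Suc.prems(1) _ Suc.prems(2)] chs_agree[OF Suc.prems(1) _ Suc.prems(3)] by simp_all
  have "agree X H H' (Suc j + d)" using Suc.prems(1) by simp
  then have "\<And>c c'. c \<in> chs X H j x \<Longrightarrow> c' \<in> chs X H j y \<Longrightarrow> ord X H d (Suc j) c c' = ord X H' d (Suc j) c c'"
    using Suc.IH chs_V by blast
  then show ?case using ch by auto
qed

lemma dlab_agree: "agree X H H' (j + d) \<Longrightarrow> x \<in> Vlev X j \<Longrightarrow> dlab X H d j x = dlab X H' d j x"
  unfolding dlab_def using ord_agree by (metis (no_types, lifting) Collect_cong)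

lemma good_agree: "agree X H H' (n + d) \<Longrightarrow> good X H n d = good X H' n d"
  unfolding good_def using reach_agree by blast

definition Fin :: "(nat \<Rightarrow> nat) \<Rightarrow> nat \<Rightarrow> ((nat \<times> nat) \<times> (nat \<times> nat)) set" where
  "Fin X N = (\<Union>j<N. Vlev X j \<times> Vlev X (Suc j))"

lemma finite_Fin: "finite (Fin X N)"
  unfolding Fin_def by (auto intro!: finite_cartesian_product simp: finite_Vlev)

lemma agree_Fin: "S \<subseteq> Fin X N \<Longrightarrow> (\<forall>e\<in>Fin X N. e \<in> H \<longleftrightarrow> e \<in> S) \<Longrightarrow> agree X H S N"
  unfolding agree_def Fin_def by blast

definition Sdec :: "(nat \<Rightarrow> nat) \<Rightarrow> nat \<Rightarrow> nat \<Rightarrow> (nat \<times> nat) \<Rightarrow> ((nat \<times> nat) \<times> (nat \<times> nat)) set \<Rightarrow> bool" where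
  "Sdec X n i w H \<longleftrightarrow> (\<exists>d. good X H n d \<and> dlab X H d n w = i)"

lemma Sdec_alt:
  assumes w: "w \<in> Vlev X n"
  shows "Sdec X n i w H \<longleftrightarrow> (\<exists>d. \<exists>S\<in>Pow (Fin X (n + d)). (good X S n d \<and> dlab X S d n w = i) \<and>
            (\<forall>e\<in>Fin X (n + d). e \<in> H \<longleftrightarrow> e \<in> S))"
proof
  assume "Sdec X n i w H"
  then obtain d where d: "good X H n d" "dlab X H d n w = i" by (auto simp: Sdec_def)
  let ?S = "H \<inter> Fin X (n + d)"
  have ag: "agree X H ?S (n + d)" by (rule agree_Fin) auto
  have "good X ?S n d" "dlab X ?S d n w = i"
    using d good_agree[OF ag] dlab_agree[OF ag w] by simp_all
  then show "\<exists>d. \<exists>S\<in>Pow (Fin X (n + d)). (good X S n d \<and> dlab X S d n w = i) \<and>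
            (\<forall>e\<in>Fin X (n + d). e \<in> H \<longleftrightarrow> e \<in> S)" by (intro exI[of _ d] bexI[of _ ?S]) auto
next
  assume "\<exists>d. \<exists>S\<in>Pow (Fin X (n + d)). (good X S n d \<and> dlab X S d n w = i) \<and>
            (\<forall>e\<in>Fin X (n + d). e \<in> H \<longleftrightarrow> e \<in> S)"
  then obtain d S where S: "S \<subseteq> Fin X (n + d)" "good X S n d" "dlab X S d n w = i"
    "\<forall>e\<in>Fin X (n + d). e \<in> H \<longleftrightarrow> e \<in> S" by blast
  have ag: "agree X H S (n + d)" using agree_Fin[OF S(1) S(4)] .
  show "Sdec X n i w H" unfolding Sdec_def
    using S good_agree[OF ag] dlab_agree[OF ag w] by auto
qed

lemma pred_constb: "Measurable.pred M (\<lambda>x. c)"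
  by (cases c) (simp_all add: pred_def)

lemma Sdec_meas:
  assumes w: "w \<in> Vlev X n"
  shows "{\<omega> \<in> space (omega X). Sdec X n i w (Gw xi \<omega>)} \<in> sets (obs_algebra X xi)"
proof -
  have g: "Measurable.pred (obs_algebra X xi) (\<lambda>\<omega>. e \<in> Gw xi \<omega>)" for e
    using gen_obs[of X e xi] by (simp add: pred_def space_obs)
  have "Measurable.pred (obs_algebra X xi) (\<lambda>\<omega>. \<exists>d. \<exists>S\<in>Pow (Fin X (n + d)). (good X S n d \<and> dlab X S d n w = i) \<and>
            (\<forall>e\<in>Fin X (n + d). e \<in> Gw xi \<omega> \<longleftrightarrow> e \<in> S))"
    by (intro pred_intros_countable pred_intros_finite pred_intros_logic g pred_constb finite_Fin finite_Pow_iff[THEN iffD2])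
  then show ?thesis unfolding Sdec_alt[OF w] pred_def space_obs .
qed




lemma perm_set_pmf[simp]: "finite S \<Longrightarrow> set_pmf (pmf_of_set {p. p permutes S}) = {p. p permutes S}"
proof -
  assume "finite S"
  then have "finite {p. p permutes S}" by (rule finite_permutations)
  moreover have "{p. p permutes S} \<noteq> {}" using permutes_id by blast
  ultimately show ?thesis by simp
qed

lemma AE_perms: "AE \<omega> in omega X. \<forall>n. fst (\<omega> n) permutes {1..X (Suc n)} \<and> snd (\<omega> n) permutes {1..X n}"
proof -
  have "AE \<omega> in omega X. fst (\<omega> n) permutes {1..X (Suc n)} \<and> snd (\<omega> n) permutes {1..X n}" for n
    unfolding omega_def
    by (rule AE_PiM_component[where P = "\<lambda>x. fst x permutes {1..X (Suc n)} \<and> snd x permutes {1..X n}"])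
       (auto simp: prob_space_measure_pmf perm_set_pmf intro!: AE_pmfI)
  then show ?thesis by (simp add: AE_all_countable)
qed

theorem proposition2p3:
  fixes X :: "nat \<Rightarrow> nat" and k :: "nat \<Rightarrow> nat \<Rightarrow> nat" and xi :: "nat \<Rightarrow> nat set set"
  assumes "admissible_data X k"
    and "fixed_partitions X k xi"
    and "\<And>n. card {i \<in> {1..X n}. k n i = 0} \<le> 1"
    and "AE \<omega> in omega X. fixation X (rand_E xi \<omega>)"
  shows "\<forall>v \<in> Vall X. rho X xi v = 1"
proof
  fix v assume "v \<in> Vall X"
  define n where "n = fst v"
  have v: "v \<in> Vlev X n" using \<open>v \<in> Vall X\<close> unfolding n_def by (auto simp: Vall_def Vlev_def)
  define M where "M = omega X"
  define F where "F = obs_algebra X xi"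
  interpret prob_space M unfolding M_def by (rule omega_prob)
  have sub: "subalgebra M F" unfolding M_def F_def by (rule obs_subalg)
  have fms: "finite_measure_subalgebra M F"
    unfolding finite_measure_subalgebra_def finite_measure_subalgebra_axioms_def
    using sub finite_measure_axioms by simp
  interpret sigma_finite_subalgebra M F by (rule finite_measure_subalgebra_is_sigma_finite[OF fms])
  define A where "A w = {\<omega>' \<in> space M. vperm (rand_perm \<omega>') v = w}" for w
  define S where "S w = {\<omega> \<in> space M. Sdec X n (snd v) w (Gw xi \<omega>)}" for w
  have good_AE: "AE \<omega> in M. (\<forall>n. fst (\<omega> n) permutes {1..X (Suc n)} \<and> snd (\<omega> n) permutes {1..X n})
      \<and> fixation X (rand_E xi \<omega>)"
    using AE_perms assms(4) unfolding M_def by eventually_elim auto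
  have key: "\<forall>w\<in>Vlev X n. (Sdec X n (snd v) w (Gw xi \<omega>) \<longleftrightarrow> vperm (rand_perm \<omega>) v = w)"
      and w0: "vperm (rand_perm \<omega>) v \<in> Vlev X n"
    if perm: "\<forall>n. fst (\<omega> n) permutes {1..X (Suc n)} \<and> snd (\<omega> n) permutes {1..X n}"
      and fx: "fixation X (rand_E xi \<omega>)" for \<omega>
  proof -
    interpret ld2 X k xi "\<lambda>n. fst (\<omega> n)" "\<lambda>n. snd (\<omega> n)"
      by unfold_locales (use assms perm in auto)
    have rp: "rand_perm \<omega> = (\<lambda>n. snd (\<omega> n))" by (simp add: rand_perm_def)
    have GG: "Gw xi \<omega> = G" by (simp add: Gw_def rand_E_def rand_perm_def)
    have fE: "fixation X E" using fx by (simp add: rand_E_def)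
    obtain d where d: "good X G n d" using fixation_good[OF fE] by blast
    show "\<forall>w\<in>Vlev X n. (Sdec X n (snd v) w (Gw xi \<omega>) \<longleftrightarrow> vperm (rand_perm \<omega>) v = w)"
    proof
      fix w assume w: "w \<in> Vlev X n"
      show "Sdec X n (snd v) w (Gw xi \<omega>) \<longleftrightarrow> vperm (rand_perm \<omega>) v = w"
      proof
        assume "Sdec X n (snd v) w (Gw xi \<omega>)"
        then obtain d' where "good X G n d'" "dlab X G d' n w = snd v" by (auto simp: Sdec_def GG)
        then show "vperm (rand_perm \<omega>) v = w" using decode[OF v w] rp by simp
      next
        assume "vperm (rand_perm \<omega>) v = w"
        then have "dlab X G d n w = snd v" using decode[OF v w d] rp by simp
        then show "Sdec X n (snd v) w (Gw xi \<omega>)" using d by (auto simp: Sdec_def GG)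
      qed
    qed
    show "vperm (rand_perm \<omega>) v \<in> Vlev X n" using vperm_V v rp by simp
  qed
  have A_sets: "A w \<in> sets M" for w
  proof -
    have "A w = {\<omega> \<in> space (omega X). (\<lambda>\<alpha>. (fst v, snd \<alpha> (snd v)) = w) (\<omega> (fst v))}"
      by (simp add: A_def M_def vperm_def rand_perm_def)
    then show ?thesis unfolding M_def
      using sets_comp[where X=X and R="\<lambda>\<alpha>. (fst v, snd \<alpha> (snd v)) = w" and a="fst v"] by simp
  qed
  have S_F: "S w \<in> sets F" if "w \<in> Vlev X n" for w
    unfolding S_def M_def F_def by (rule Sdec_meas[OF that])
  have S_M: "S w \<in> sets M" if "w \<in> Vlev X n" for w
    using S_F[OF that] sub by (auto simp: subalgebra_def)
  have ce: "AE \<omega> in M. real_cond_exp M F (indicator (A w)) \<omega> = indicator (S w) \<omega>"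
    if w: "w \<in> Vlev X n" for w
  proof -
    have "AE \<omega> in M. indicator (A w) \<omega> = (indicator (S w) \<omega> :: real)"
      using good_AE AE_space
    proof eventually_elim
      case (elim \<omega>)
      then show ?case using key[of \<omega>] w by (auto simp: A_def S_def indicator_def)
    qed
    then have "AE \<omega> in M. real_cond_exp M F (indicator (A w)) \<omega> = real_cond_exp M F (indicator (S w)) \<omega>"
      by (intro real_cond_exp_cong) (auto intro: borel_measurable_indicator A_sets S_M[OF w])
    moreover have "AE \<omega> in M. real_cond_exp M F (indicator (S w)) \<omega> = indicator (S w) \<omega>"
    proof (rule real_cond_exp_F_meas)
      show "integrable M (indicator (S w) :: _ \<Rightarrow> real)"
        by (rule integrable_real_indicator[OF S_M[OF w]]) (simp add: less_top[symmetric])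
      show "(indicator (S w) :: _ \<Rightarrow> real) \<in> borel_measurable F" using S_F[OF w] by (rule borel_measurable_indicator)
    qed
    ultimately show ?thesis by eventually_elim simp
  qed
  have ceall: "AE \<omega> in M. \<forall>w\<in>Vlev X n. real_cond_exp M F (indicator (A w)) \<omega> = indicator (S w) \<omega>"
    by (rule AE_finite_allI[OF finite_Vlev]) (rule ce)
  have maxAE: "AE \<omega> in M. Max ((\<lambda>w. real_cond_exp M F (indicator (A w)) \<omega>) ` Vlev X n) = 1"
    using ceall good_AE AE_space
  proof eventually_elim
    case (elim \<omega>)
    let ?w0 = "vperm (rand_perm \<omega>) v"
    have w0: "?w0 \<in> Vlev X n" using w0 elim by blast
    have val: "real_cond_exp M F (indicator (A w)) \<omega> = (if ?w0 = w then 1 else 0)" if "w \<in> Vlev X n" for w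
      using elim key[of \<omega>] that by (auto simp: S_def indicator_def)
    show ?case
    proof (rule Max_eqI)
      show "finite ((\<lambda>w. real_cond_exp M F (indicator (A w)) \<omega>) ` Vlev X n)" by (simp add: finite_Vlev)
      show "\<And>y. y \<in> (\<lambda>w. real_cond_exp M F (indicator (A w)) \<omega>) ` Vlev X n \<Longrightarrow> y \<le> 1"
        using val by auto
      show "1 \<in> (\<lambda>w. real_cond_exp M F (indicator (A w)) \<omega>) ` Vlev X n"
        using val[OF w0] w0 by (metis image_eqI)
    qed
  qed
  have "rho X xi v = (\<integral>\<omega>. Max ((\<lambda>w. real_cond_exp M F (indicator (A w)) \<omega>) ` Vlev X n) \<partial>M)"
    by (simp add: rho_def M_def F_def A_def n_def)
  also have "\<dots> = (\<integral>\<omega>. 1 \<partial>M)"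
  proof (rule integral_cong_AE)
    show "(\<lambda>\<omega>. Max ((\<lambda>w. real_cond_exp M F (indicator (A w)) \<omega>) ` Vlev X n)) \<in> borel_measurable M"
      by (rule borel_measurable_Max[OF finite_Vlev]) (rule borel_measurable_cond_exp2)
    show "(\<lambda>\<omega>. 1::real) \<in> borel_measurable M" by simp
    show "AE \<omega> in M. Max ((\<lambda>w. real_cond_exp M F (indicator (A w)) \<omega>) ` Vlev X n) = 1" by (rule maxAE)
  qed
  also have "\<dots> = 1" using prob_space by simp
  finally show "rho X xi v = 1" .
qed



end
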